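(* Let $a,b\in\mathbb{C}$ and assume $b=[b]$. Then $\langle[a],b\rangle\ge\langle[a+b],b\rangle$.
   Context: Fix an integer $R\ge2$ and $\theta_g=\pi/R$. Polar rounding on $\mathbb{C}$: for $z=Ae^{i\theta}$, $[z]=[A]e^{i[\theta]}$, where $[A]$ is a fixed real rounding function of the modulus and $[\theta]$ is the multiple of $\theta_g$ closest to $\theta$ (minimal error rounding with deterministic tie-breaking). For $u,v\in\mathbb{C}$ (viewed as vectors in $\mathbb{R}^2$), $\langle u,v\rangle\in[0,\pi]$ denotes the smallest angle between $u$ and $v$. *)

theory Defs
  imports "HOL-Analysis.Analysis"
begin

definition vec_angle :: "complex \<Rightarrow> complex \<Rightarrow> real" where
  "vec_angle u v = arccos ((u \<bullet> v) / (norm u * norm v))"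

text \<open>ar is a minimal-error rounding of angles to the grid of multiples of pi/R
  (any deterministic tie-breaking, i.e. ar is an arbitrary function with these properties).\<close>
definition angle_rounding :: "nat \<Rightarrow> (real \<Rightarrow> real) \<Rightarrow> bool" where
  "angle_rounding R ar \<longleftrightarrow>
     (\<forall>\<theta>. (\<exists>k::int. ar \<theta> = of_int k * (pi / real R)) \<and>
          (\<forall>k::int. \<bar>ar \<theta> - \<theta>\<bar> \<le> \<bar>of_int k * (pi / real R) - \<theta>\<bar>))"

text \<open>Polar rounding: [A e^{i theta}] = [A] e^{i [theta]}, with theta = Arg z in (-pi,pi].\<close>
definition polar_round :: "(real \<Rightarrow> real) \<Rightarrow> (real \<Rightarrow> real) \<Rightarrow> complex \<Rightarrow> complex" where
  "polar_round rm ar z = complex_of_real (rm (cmod z)) * cis (ar (Arg z))"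

end

theory Submission
  imports Defs
begin

lemma polar_form: "z = complex_of_real (cmod z) * cis (Arg z)"
proof (cases "z = 0")
  case True then show ?thesis by simp
next
  case False then show ?thesis by (simp add: cis_Arg sgn_div_norm scaleR_conv_of_real)
qed

lemma polar_re_im: "Re z = cmod z * cos (Arg z)" "Im z = cmod z * sin (Arg z)"
  using arg_cong[OF polar_form[of z], of Re] arg_cong[OF polar_form[of z], of Im] by simp_all

lemma vec_angle_polar:
  assumes "c > 0" "r > 0"
  shows "vec_angle (complex_of_real c * cis t) (complex_of_real r * cis p) = arccos (cos (t - p))"
proof -
  have "(complex_of_real c * cis t) \<bullet> (complex_of_real r * cis p) = c * r * cos (t - p)"
    by (simp add: inner_complex_def cos_diff algebra_simps)
  moreover have "norm (complex_of_real c * cis t) = c" "norm (complex_of_real r * cis p) = r"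
    using assms by (simp_all add: norm_mult)
  ultimately show ?thesis using assms unfolding vec_angle_def by simp
qed

lemma cos_shift: "cos (x - 2 * pi * of_int m) = cos x" "sin (x - 2 * pi * of_int m) = sin x"
  by (simp_all add: cos_diff sin_diff)

lemma reduce: "\<exists>m::int. - pi < t - 2 * pi * of_int m \<and> t - 2 * pi * of_int m \<le> pi"
proof -
  define m where "m = \<lceil>(t - pi) / (2*pi)\<rceil>"
  have "(t - pi) / (2*pi) \<le> of_int m" "of_int m < (t - pi) / (2*pi) + 1" unfolding m_def by linarith+
  then have "t - pi \<le> 2 * pi * of_int m" "2 * pi * of_int m < t - pi + 2*pi"
    using pi_gt_zero by (simp_all add: field_simps)
  then show ?thesis by (intro exI[of _ m]) linarith
qed

definition near :: "real \<Rightarrow> real \<Rightarrow> real \<Rightarrow> bool" where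
  "near h \<rho> x \<longleftrightarrow> (\<exists>k::int. \<rho> = of_int k * h) \<and> (\<forall>k::int. \<bar>\<rho> - x\<bar> \<le> \<bar>of_int k * h - x\<bar>)"

lemma near_mono:
  assumes "near h r1 x1" "near h r2 x2" "x1 < x2" shows "r1 \<le> r2"
proof -
  obtain k1 k2 where k: "r1 = of_int k1 * h" "r2 = of_int k2 * h" using assms unfolding near_def by blast
  have "\<bar>r1 - x1\<bar> \<le> \<bar>r2 - x1\<bar>" using assms(1) k(2) unfolding near_def by blast
  moreover have "\<bar>r2 - x2\<bar> \<le> \<bar>r1 - x2\<bar>" using assms(2) k(1) unfolding near_def by blast
  ultimately show ?thesis using assms(3) by (auto simp: abs_if split: if_splits)
qed

lemma near_sign: assumes "near h r x" shows "(0 \<le> x \<longrightarrow> 0 \<le> r) \<and> (x \<le> 0 \<longrightarrow> r \<le> 0)"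
proof -
  have "\<bar>r - x\<bar> \<le> \<bar>of_int 0 * h - x\<bar>" using assms unfolding near_def by blast
  then show ?thesis by (auto simp: abs_if split: if_splits)
qed

lemma sin_sign:
  assumes "- pi < t" "t < pi"
  shows "(0 < t \<longrightarrow> 0 < sin t) \<and> (t < 0 \<longrightarrow> sin t < 0)"
proof -
  have "t < 0 \<Longrightarrow> 0 < sin (- t)" using assms by (intro sin_gt_zero) auto
  then show ?thesis using assms sin_gt_zero by auto
qed

lemma geo:
  fixes A S r x y :: real
  assumes "A \<ge> 0" "S \<ge> 0" "r > 0" and c: "A * cos x + r = S * cos y" and s: "A * sin x = S * sin y"
    and "- pi < x" "x < pi" "- pi < y" "y \<le> pi"
  shows "(0 \<le> x \<and> 0 \<le> y \<and> y \<le> x) \<or> (x \<le> 0 \<and> x \<le> y \<and> y \<le> 0)"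
proof -
  have sx: "(0 < x \<longrightarrow> 0 < sin x) \<and> (x < 0 \<longrightarrow> sin x < 0)" using sin_sign assms by auto
  have ynpi: "y \<noteq> pi"
  proof
    assume yp: "y = pi"
    then have "A * sin x = 0" using s by simp
    then have "A = 0 \<or> x = 0" using sx by (cases "x = 0") auto
    then show False using c yp assms(1-3) by auto
  qed
  have sy: "(0 < y \<longrightarrow> 0 < sin y) \<and> (y < 0 \<longrightarrow> sin y < 0)" using sin_sign assms ynpi by auto
  have Spos: "S > 0"
  proof (rule ccontr)
    assume "\<not> S > 0" then have "S = 0" using assms by simp
    then have "A * sin x = 0" "A * cos x + r = 0" using s c by auto
    then have "A = 0 \<or> x = 0" using sx by (cases "x = 0") auto
    then show False using \<open>A * cos x + r = 0\<close> assms(1-3) by auto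
  qed
  have key: "S * sin (x - y) = r * sin x"
  proof -
    have "S * sin (x - y) = sin x * (S * cos y) - cos x * (S * sin y)" by (simp add: sin_diff algebra_simps)
    also have "\<dots> = r * sin x" unfolding c[symmetric] s[symmetric] by (simp add: algebra_simps)
    finally show ?thesis .
  qed
  have dxy: "(0 < x - y \<longrightarrow> 0 < sin (x - y)) \<and> (x - y < 0 \<longrightarrow> sin (x - y) < 0)" if "- pi < x - y" "x - y < pi"
    using sin_sign that by blast
  show ?thesis
  proof (cases "0 \<le> x")
    case True
    then have "0 \<le> sin x" using sx by (cases "x = 0") auto
    then have "0 \<le> S * sin y" unfolding s[symmetric] using assms(1) by simp
    then have "0 \<le> sin y" using Spos by (simp add: zero_le_mult_iff)
    then have y0: "0 \<le> y" using sy by linarith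
    have "0 \<le> S * sin (x - y)" unfolding key using \<open>0 \<le> sin x\<close> assms(3) by simp
    then have "0 \<le> sin (x - y)" using Spos by (simp add: zero_le_mult_iff)
    then have "y \<le> x" using dxy y0 assms ynpi True by linarith
    then show ?thesis using True y0 by simp
  next
    case False
    then have "sin x < 0" using sx by auto
    then have "S * sin y \<le> 0" unfolding s[symmetric] using assms(1) by (simp add: mult_nonneg_nonpos)
    then have "sin y \<le> 0" using Spos by (simp add: mult_le_0_iff)
    then have y0: "y \<le> 0" using sy by linarith
    have "S * sin (x - y) < 0" unfolding key using \<open>sin x < 0\<close> assms(3) by (simp add: mult_pos_neg)
    then have "sin (x - y) < 0" using Spos by (simp add: mult_less_0_iff)
    then have "x \<le> y" using dxy y0 assms False by linarith
    then show ?thesis using False y0 by simp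
  qed
qed

lemma near_shift:
  assumes ar: "angle_rounding R ar" and R: "R > 0" and phi: "\<phi> = of_int k\<phi> * (pi / real R)"
  shows "near (pi / real R) (ar \<theta> - \<phi> - 2 * pi * of_int m) (\<theta> - \<phi> - 2 * pi * of_int m)"
proof -
  have Rr: "real R * (pi / real R) = pi" using R by simp
  obtain kt where kt: "ar \<theta> = of_int kt * (pi / real R)" using ar unfolding angle_rounding_def by blast
  have g: "\<And>k. of_int k * (pi / real R) - \<phi> - 2 * pi * of_int m = of_int (k - k\<phi> - 2 * int R * m) * (pi / real R)"
    using R by (simp add: phi field_simps)
  show ?thesis unfolding near_def
  proof (intro conjI allI)
    show "\<exists>k::int. ar \<theta> - \<phi> - 2 * pi * of_int m = of_int k * (pi / real R)"
      using g[of kt] kt by metis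
  next
    fix k :: int
    have "\<bar>ar \<theta> - \<theta>\<bar> \<le> \<bar>of_int (k + k\<phi> + 2 * int R * m) * (pi / real R) - \<theta>\<bar>"
      using ar unfolding angle_rounding_def by blast
    moreover have "of_int (k + k\<phi> + 2 * int R * m) * (pi / real R) - \<theta> = of_int k * (pi / real R) - (\<theta> - \<phi> - 2 * pi * of_int m)"
      using R by (simp add: phi field_simps)
    ultimately show "\<bar>ar \<theta> - \<phi> - 2 * pi * of_int m - (\<theta> - \<phi> - 2 * pi * of_int m)\<bar>
        \<le> \<bar>of_int k * (pi / real R) - (\<theta> - \<phi> - 2 * pi * of_int m)\<bar>" by simp
  qed
qed

lemma near_bound:
  assumes n: "near (pi / real R) \<rho> x" and R: "R > 0" and x: "- pi < x" "x \<le> pi"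
  shows "- pi \<le> \<rho> \<and> \<rho> \<le> pi \<and> (x = pi \<longrightarrow> \<rho> = pi)"
proof -
  have Rr: "of_int (int R) * (pi / real R) = pi" "of_int (- int R) * (pi / real R) = - pi" using R by simp_all
  have "\<bar>\<rho> - x\<bar> \<le> \<bar>pi - x\<bar>" "\<bar>\<rho> - x\<bar> \<le> \<bar>- pi - x\<bar>" using n Rr unfolding near_def by metis+
  then show ?thesis using x by (auto simp: abs_if split: if_splits)
qed

theorem lemma22:
  fixes R :: nat and rm ar :: "real \<Rightarrow> real" and a b :: complex
  assumes "R \<ge> 2"
    and "angle_rounding R ar"
    and "\<forall>A\<ge>0. rm A \<ge> 0"
    and "b = polar_round rm ar b"
    and "b \<noteq> 0" and "polar_round rm ar a \<noteq> 0" and "polar_round rm ar (a + b) \<noteq> 0"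
  shows "vec_angle (polar_round rm ar a) b \<ge> vec_angle (polar_round rm ar (a + b)) b"
proof -
  have R: "R > 0" using assms(1) by simp
  define h where "h = pi / real R"
  define \<phi> where "\<phi> = ar (Arg b)"
  obtain k\<phi> where k\<phi>: "\<phi> = of_int k\<phi> * (pi / real R)" using assms(2) unfolding angle_rounding_def \<phi>_def by blast
  define r where "r = rm (cmod b)"
  have beq: "b = complex_of_real r * cis \<phi>" using assms(4) unfolding polar_round_def r_def \<phi>_def by simp
  have "r \<ge> 0" using assms(3) unfolding r_def by simp
  moreover have "r \<noteq> 0" using beq assms(5) by auto
  ultimately have rpos: "r > 0" by simp
  define ca where "ca = rm (cmod a)"
  define cs where "cs = rm (cmod (a + b))"
  define ta where "ta = ar (Arg a)"
  define ts where "ts = ar (Arg (a + b))"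
  have aeq: "polar_round rm ar a = complex_of_real ca * cis ta" unfolding polar_round_def ca_def ta_def ..
  have seq: "polar_round rm ar (a + b) = complex_of_real cs * cis ts" unfolding polar_round_def cs_def ts_def ..
  have "ca \<ge> 0" using assms(3) unfolding ca_def by simp
  moreover have "ca \<noteq> 0" using aeq assms(6) by auto
  ultimately have capos: "ca > 0" by simp
  have "cs \<ge> 0" using assms(3) unfolding cs_def by simp
  moreover have "cs \<noteq> 0" using seq assms(7) by auto
  ultimately have cspos: "cs > 0" by simp
  have va: "vec_angle (polar_round rm ar a) b = arccos (cos (ta - \<phi>))"
    unfolding aeq by (subst beq) (rule vec_angle_polar[OF capos rpos])
  have vs: "vec_angle (polar_round rm ar (a + b)) b = arccos (cos (ts - \<phi>))"
    unfolding seq by (subst beq) (rule vec_angle_polar[OF cspos rpos])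
  define \<alpha> where "\<alpha> = Arg a"
  define \<sigma> where "\<sigma> = Arg (a + b)"
  obtain ma :: int where ma: "- pi < \<alpha> - \<phi> - 2 * pi * of_int ma" "\<alpha> - \<phi> - 2 * pi * of_int ma \<le> pi"
    using reduce[of "\<alpha> - \<phi>"] by auto
  obtain ms :: int where ms: "- pi < \<sigma> - \<phi> - 2 * pi * of_int ms" "\<sigma> - \<phi> - 2 * pi * of_int ms \<le> pi"
    using reduce[of "\<sigma> - \<phi>"] by auto
  define x where "x = \<alpha> - \<phi> - 2 * pi * of_int ma"
  define y where "y = \<sigma> - \<phi> - 2 * pi * of_int ms"
  define \<rho>a where "\<rho>a = ta - \<phi> - 2 * pi * of_int ma"
  define \<rho>s where "\<rho>s = ts - \<phi> - 2 * pi * of_int ms"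
  have na: "near h \<rho>a x" unfolding h_def \<rho>a_def x_def ta_def \<alpha>_def using near_shift[OF assms(2) R k\<phi>] .
  have ns: "near h \<rho>s y" unfolding h_def \<rho>s_def y_def ts_def \<sigma>_def using near_shift[OF assms(2) R k\<phi>] .
  have cra: "cos (ta - \<phi>) = cos \<rho>a" unfolding \<rho>a_def using cos_shift by simp
  have crs: "cos (ts - \<phi>) = cos \<rho>s" unfolding \<rho>s_def using cos_shift by simp
  have ba: "- pi \<le> \<rho>a \<and> \<rho>a \<le> pi \<and> (x = pi \<longrightarrow> \<rho>a = pi)"
    using near_bound[OF na[unfolded h_def] R] ma unfolding x_def by simp
  have bs: "- pi \<le> \<rho>s \<and> \<rho>s \<le> pi"
    using near_bound[OF ns[unfolded h_def] R] ms unfolding y_def by simp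
  define A where "A = cmod a"
  define S where "S = cmod (a + b)"
  have e1: "S * cos \<sigma> = A * cos \<alpha> + r * cos \<phi>"
    using polar_re_im(1)[of "a+b"] polar_re_im(1)[of a] arg_cong[OF beq, of Re]
    unfolding S_def A_def \<sigma>_def \<alpha>_def by simp
  have e2: "S * sin \<sigma> = A * sin \<alpha> + r * sin \<phi>"
    using polar_re_im(2)[of "a+b"] polar_re_im(2)[of a] arg_cong[OF beq, of Im]
    unfolding S_def A_def \<sigma>_def \<alpha>_def by simp
  have c: "A * cos x + r = S * cos y"
  proof -
    have "S * cos y = S * cos (\<sigma> - \<phi>)" unfolding y_def using cos_shift by simp
    also have "\<dots> = (S * cos \<sigma>) * cos \<phi> + (S * sin \<sigma>) * sin \<phi>" by (simp add: cos_diff algebra_simps)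
    also have "\<dots> = A * cos (\<alpha> - \<phi>) + r * ((sin \<phi>)\<^sup>2 + (cos \<phi>)\<^sup>2)"
      unfolding e1 e2 cos_diff power2_eq_square by (simp only: algebra_simps)
    also have "\<dots> = A * cos x + r" unfolding x_def using cos_shift by simp
    finally show ?thesis by simp
  qed
  have s: "A * sin x = S * sin y"
  proof -
    have "S * sin y = S * sin (\<sigma> - \<phi>)" unfolding y_def using cos_shift by simp
    also have "\<dots> = (S * sin \<sigma>) * cos \<phi> - (S * cos \<sigma>) * sin \<phi>" by (simp add: sin_diff algebra_simps)
    also have "\<dots> = A * sin (\<alpha> - \<phi>)"
      unfolding e1 e2 by (simp add: sin_diff algebra_simps)
    also have "\<dots> = A * sin x" unfolding x_def using cos_shift by simp
    finally show ?thesis by simp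
  qed
  have "cos \<rho>a \<le> cos \<rho>s"
  proof (cases "x = pi")
    case True
    then have "\<rho>a = pi" using ba by simp
    then show ?thesis by simp
  next
    case False
    then have xlt: "x < pi" using ma unfolding x_def by simp
    have g: "(0 \<le> x \<and> 0 \<le> y \<and> y \<le> x) \<or> (x \<le> 0 \<and> x \<le> y \<and> y \<le> 0)"
      using geo[OF _ _ rpos c s] ma ms xlt unfolding A_def S_def x_def y_def by simp
    show ?thesis
    proof (cases "x = y")
      case True
      have "2 * pi * (of_int ma - of_int ms) = \<alpha> - \<sigma>" using True unfolding x_def y_def by (simp add: algebra_simps)
      moreover have "- pi < \<alpha>" "\<alpha> \<le> pi" "- pi < \<sigma>" "\<sigma> \<le> pi" unfolding \<alpha>_def \<sigma>_def using Arg_bounded by auto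
      ultimately have h1: "2 * pi * (of_int ma - of_int ms) < 2 * pi * 1" and h2: "2 * pi * (- 1) < 2 * pi * (of_int ma - of_int ms)"
        by linarith+
      have p0: "0 \<le> 2 * pi" using pi_gt_zero by simp
      have "- 1 < (of_int ma - of_int ms :: real)" by (rule mult_left_less_imp_less[OF h2 p0])
      moreover have "of_int ma - of_int ms < (1::real)" by (rule mult_left_less_imp_less[OF h1 p0])
      ultimately have "ma = ms" by linarith
      then have "\<rho>a = \<rho>s" using True unfolding x_def y_def \<rho>a_def \<rho>s_def ta_def ts_def \<alpha>_def \<sigma>_def by simp
      then show ?thesis by simp
    next
      case False
      show ?thesis
      proof (cases "0 \<le> x")
        case True
        then have "y < x" "0 \<le> y" using g False by auto
        then have "\<rho>s \<le> \<rho>a" "0 \<le> \<rho>s" using near_mono[OF ns na] near_sign[OF ns] by auto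
        then show ?thesis using ba by (intro cos_monotone_0_pi_le) auto
      next
        case False
        then have "x < y" "y \<le> 0" using g \<open>x \<noteq> y\<close> by auto
        then have "\<rho>a \<le> \<rho>s" "\<rho>s \<le> 0" using near_mono[OF na ns] near_sign[OF ns] by auto
        then have "cos (- \<rho>a) \<le> cos (- \<rho>s)" using ba by (intro cos_monotone_0_pi_le) auto
        then show ?thesis by simp
      qed
    qed
  qed
  then have "arccos (cos (ts - \<phi>)) \<le> arccos (cos (ta - \<phi>))"
    unfolding cra crs by (intro arccos_le_arccos) auto
  then show ?thesis unfolding va vs .
qed

end
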